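(* Let $\Lambda$ be a finite-dimensional algebra over an algebraically closed field $k$ and let $M_1,M_2$ be non-isomorphic finitely generated $\Lambda$-modules that are bricks, i.e. $\mathrm{End}_\Lambda(M_i)\simeq k$ for $i=1,2$. Then $\mathrm{End}_\Lambda(M_1\oplus M_2)$ is symmetric if and only if $\mathrm{Hom}_\Lambda(M_1,M_2)=\mathrm{Hom}_\Lambda(M_2,M_1)=0$.
   Context: Symmetric: the algebra is isomorphic to its $k$-dual as a bimodule. *)

theory Defs
  imports "Jordan_Normal_Form.Matrix" "HOL-Computational_Algebra.Polynomial"
begin

definition alg_closed :: "'k::field itself \<Rightarrow> bool" where
  "alg_closed _ \<longleftrightarrow> (\<forall>p :: 'k poly. degree p > 0 \<longrightarrow> (\<exists>x. poly p x = 0))"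

definition fd_algebra :: "('k::field \<Rightarrow> 'a::ring_1 \<Rightarrow> 'a) \<Rightarrow> bool" where
  "fd_algebra scale \<longleftrightarrow>
     vector_space scale \<and>
     (\<exists>B. finite_dimensional_vector_space scale B) \<and>
     (\<forall>c a b. scale c (a * b) = scale c a * b \<and> scale c (a * b) = a * scale c b)"

text \<open>A finitely generated (= finite-dimensional) left module over the algebra,
  realised on k^n: a k-linear unital ring homomorphism rho from the algebra into
  the n x n matrices over k.\<close>
definition is_module :: "('k::field \<Rightarrow> 'a::ring_1 \<Rightarrow> 'a) \<Rightarrow> nat \<Rightarrow> ('a \<Rightarrow> 'k mat) \<Rightarrow> bool" where
  "is_module scale n rho \<longleftrightarrow>
     (\<forall>a. rho a \<in> carrier_mat n n) \<and>
     rho 1 = 1\<^sub>m n \<and>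
     (\<forall>a b. rho (a + b) = rho a + rho b) \<and>
     (\<forall>a b. rho (a * b) = rho a * rho b) \<and>
     (\<forall>c a. rho (scale c a) = c \<cdot>\<^sub>m rho a)"

definition hom_mod :: "nat \<Rightarrow> ('a \<Rightarrow> 'k::field mat) \<Rightarrow> nat \<Rightarrow> ('a \<Rightarrow> 'k mat) \<Rightarrow> 'k mat set" where
  "hom_mod m rho n sigma = {f \<in> carrier_mat n m. \<forall>a. f * rho a = sigma a * f}"

definition end_mod :: "nat \<Rightarrow> ('a \<Rightarrow> 'k::field mat) \<Rightarrow> 'k mat set" where
  "end_mod n rho = hom_mod n rho n rho"

definition iso_mod :: "nat \<Rightarrow> ('a \<Rightarrow> 'k::field mat) \<Rightarrow> nat \<Rightarrow> ('a \<Rightarrow> 'k mat) \<Rightarrow> bool" where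
  "iso_mod m rho n sigma \<longleftrightarrow>
     (\<exists>f \<in> hom_mod m rho n sigma. \<exists>g \<in> hom_mod n sigma m rho. f * g = 1\<^sub>m n \<and> g * f = 1\<^sub>m m)"

definition dsum_rep :: "nat \<Rightarrow> ('a \<Rightarrow> 'k::field mat) \<Rightarrow> nat \<Rightarrow> ('a \<Rightarrow> 'k mat) \<Rightarrow> 'a \<Rightarrow> 'k mat" where
  "dsum_rep n1 rho1 n2 rho2 = (\<lambda>a. four_block_mat (rho1 a) (0\<^sub>m n1 n2) (0\<^sub>m n2 n1) (rho2 a))"

definition brick :: "nat \<Rightarrow> ('a \<Rightarrow> 'k::field mat) \<Rightarrow> bool" where
  "brick n rho \<longleftrightarrow>
     (\<exists>\<phi>. bij_betw \<phi> (end_mod n rho) (UNIV :: 'k set) \<and>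
        (\<forall>f \<in> end_mod n rho. \<forall>g \<in> end_mod n rho.
            \<phi> (f + g) = \<phi> f + \<phi> g \<and> \<phi> (f * g) = \<phi> f * \<phi> g) \<and>
        (\<forall>c. \<forall>f \<in> end_mod n rho. \<phi> (c \<cdot>\<^sub>m f) = c * \<phi> f) \<and>
        \<phi> (1\<^sub>m n) = 1)"

definition kdual :: "'k::field mat set \<Rightarrow> ('k mat \<Rightarrow> 'k) set" where
  "kdual A = {f. (\<forall>x\<in>A. \<forall>y\<in>A. f (x + y) = f x + f y) \<and>
                 (\<forall>c. \<forall>x\<in>A. f (c \<cdot>\<^sub>m x) = c * f x) \<and>
                 (\<forall>x. x \<notin> A \<longrightarrow> f x = 0)}"

text \<open>A (subalgebra of matrices) is symmetric: A is isomorphic to D(A) as an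
  A-A-bimodule, where (a . f . b)(y) = f (b * y * a).\<close>
definition symmetric_alg :: "'k::field mat set \<Rightarrow> bool" where
  "symmetric_alg A \<longleftrightarrow>
     (\<exists>\<Phi>. bij_betw \<Phi> A (kdual A) \<and>
        (\<forall>x\<in>A. \<forall>y\<in>A. \<Phi> (x + y) = (\<lambda>z. \<Phi> x z + \<Phi> y z)) \<and>
        (\<forall>c. \<forall>x\<in>A. \<Phi> (c \<cdot>\<^sub>m x) = (\<lambda>z. c * \<Phi> x z)) \<and>
        (\<forall>a\<in>A. \<forall>x\<in>A. \<forall>b\<in>A.
            \<Phi> (a * x * b) = (\<lambda>y. if y \<in> A then \<Phi> x (b * y * a) else 0)))"

end

theory Submission
  imports Defs
begin

lemma one_smult_mat'[simp]: "(1::'a::semiring_1) \<cdot>\<^sub>m A = A"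
  by (rule eq_matI, auto)

lemma zero_smult_mat'[simp]: "(0::'a::semiring_1) \<cdot>\<^sub>m A = 0\<^sub>m (dim_row A) (dim_col A)"
  by (rule eq_matI, auto)

lemma smult_smult_mat'[simp]: "(a::'a::semiring_1) \<cdot>\<^sub>m (b \<cdot>\<^sub>m A) = (a * b) \<cdot>\<^sub>m A"
  by (rule eq_matI, auto simp: mult.assoc)

lemma fb_inj:
  assumes c: "A \<in> carrier_mat n1 m1" "B \<in> carrier_mat n1 m2" "C \<in> carrier_mat n2 m1" "D \<in> carrier_mat n2 m2"
   "A' \<in> carrier_mat n1 m1" "B' \<in> carrier_mat n1 m2" "C' \<in> carrier_mat n2 m1" "D' \<in> carrier_mat n2 m2"
  and e: "four_block_mat A B C D = four_block_mat A' B' C' D'"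
  shows "A = A' \<and> B = B' \<and> C = C' \<and> D = D'"
proof (intro conjI)
  let ?F = "four_block_mat A B C D" and ?G = "four_block_mat A' B' C' D'"
  have ix: "\<And>i j. i < n1 + n2 \<Longrightarrow> j < m1 + m2 \<Longrightarrow> ?F $$ (i,j) = ?G $$ (i,j)" using e by simp
  show "A = A'"
  proof (rule eq_matI)
    fix i j assume "i < dim_row A'" "j < dim_col A'"
    thus "A $$ (i,j) = A' $$ (i,j)" using ix[of i j] c by auto
  qed (use c in auto)
  show "B = B'"
  proof (rule eq_matI)
    fix i j assume "i < dim_row B'" "j < dim_col B'"
    thus "B $$ (i,j) = B' $$ (i,j)" using ix[of i "j + m1"] c by auto
  qed (use c in auto)
  show "C = C'"
  proof (rule eq_matI)
    fix i j assume "i < dim_row C'" "j < dim_col C'"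
    thus "C $$ (i,j) = C' $$ (i,j)" using ix[of "i + n1" j] c by auto
  qed (use c in auto)
  show "D = D'"
  proof (rule eq_matI)
    fix i j assume "i < dim_row D'" "j < dim_col D'"
    thus "D $$ (i,j) = D' $$ (i,j)" using ix[of "i + n1" "j + m1"] c by auto
  qed (use c in auto)
qed

lemma brick_scalar:
  fixes rho :: "'a::ring_1 \<Rightarrow> 'k::field mat"
  assumes m: "is_module scale n rho" and b: "brick n rho"
  shows "0 < n" "f \<in> end_mod n rho \<Longrightarrow> \<exists>c. f = c \<cdot>\<^sub>m 1\<^sub>m n"
proof -
  obtain \<phi> where bij: "bij_betw \<phi> (end_mod n rho) (UNIV :: 'k set)"
    and sm: "\<forall>c. \<forall>f \<in> end_mod n rho. \<phi> (c \<cdot>\<^sub>m f) = c * \<phi> f" and one: "\<phi> (1\<^sub>m n) = 1"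
    using b unfolding brick_def by blast
  have rc: "\<And>a. rho a \<in> carrier_mat n n" using m unfolding is_module_def by auto
  have sc: "\<And>c. c \<cdot>\<^sub>m 1\<^sub>m n \<in> end_mod n rho"
    unfolding end_mod_def hom_mod_def using rc
    by (auto simp: mult_smult_assoc_mat[of _ n n _ n] mult_smult_distrib[of _ n n _ n] left_mult_one_mat[OF rc] right_mult_one_mat[OF rc])
  have onee: "1\<^sub>m n \<in> end_mod n rho" using sc[of 1] by simp
  have phic: "\<And>c. \<phi> (c \<cdot>\<^sub>m 1\<^sub>m n) = c" using sm onee one by simp
  show "0 < n"
  proof (rule ccontr)
    assume "\<not> 0 < n" hence n0: "n = 0" by simp
    have "0 \<cdot>\<^sub>m 1\<^sub>m n = (1\<^sub>m n :: 'k mat)" by (rule eq_matI, auto simp: n0)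
    hence "\<phi> (1\<^sub>m n) = 0" using phic[of 0] by simp
    thus False using one by simp
  qed
  assume f: "f \<in> end_mod n rho"
  have "\<phi> (\<phi> f \<cdot>\<^sub>m 1\<^sub>m n) = \<phi> f" by (rule phic)
  hence "\<phi> f \<cdot>\<^sub>m 1\<^sub>m n = f" using bij sc f unfolding bij_betw_def inj_on_def by blast
  thus "\<exists>c. f = c \<cdot>\<^sub>m 1\<^sub>m n" by metis
qed

lemma comp_zero:
  fixes rho1 rho2 :: "'a::ring_1 \<Rightarrow> 'k::field mat"
  assumes m1: "is_module scale n1 rho1" and m2: "is_module scale n2 rho2"
    and b1: "brick n1 rho1" and b2: "brick n2 rho2"
    and ni: "\<not> iso_mod n1 rho1 n2 rho2"
    and g: "g \<in> hom_mod n2 rho2 n1 rho1" and h: "h \<in> hom_mod n1 rho1 n2 rho2"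
  shows "g * h = 0\<^sub>m n1 n1 \<and> h * g = 0\<^sub>m n2 n2"
proof -
  have r1: "\<And>a. rho1 a \<in> carrier_mat n1 n1" using m1 unfolding is_module_def by auto
  have r2: "\<And>a. rho2 a \<in> carrier_mat n2 n2" using m2 unfolding is_module_def by auto
  have gc: "g \<in> carrier_mat n1 n2" and gh: "\<And>a. g * rho2 a = rho1 a * g"
    using g unfolding hom_mod_def by auto
  have hc: "h \<in> carrier_mat n2 n1" and hh: "\<And>a. h * rho1 a = rho2 a * h"
    using h unfolding hom_mod_def by auto
  have "g * h \<in> end_mod n1 rho1"
  proof -
    have "\<And>a. g * h * rho1 a = rho1 a * (g * h)"
    proof -
      fix a
      have "g * h * rho1 a = g * (h * rho1 a)" using assoc_mult_mat[OF gc hc r1] .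
      also have "\<dots> = (g * rho2 a) * h" using assoc_mult_mat[OF gc r2 hc] by (simp add: hh)
      also have "\<dots> = rho1 a * (g * h)" using assoc_mult_mat[OF r1 gc hc] by (simp add: gh)
      finally show "g * h * rho1 a = rho1 a * (g * h)" .
    qed
    thus ?thesis unfolding end_mod_def hom_mod_def using gc hc by auto
  qed
  then obtain c where c: "g * h = c \<cdot>\<^sub>m 1\<^sub>m n1" using brick_scalar(2)[OF m1 b1] by blast
  have "h * g \<in> end_mod n2 rho2"
  proof -
    have "\<And>a. h * g * rho2 a = rho2 a * (h * g)"
    proof -
      fix a
      have "h * g * rho2 a = h * (g * rho2 a)" using assoc_mult_mat[OF hc gc r2] .
      also have "\<dots> = (h * rho1 a) * g" using assoc_mult_mat[OF hc r1 gc] by (simp add: gh)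
      also have "\<dots> = rho2 a * (h * g)" using assoc_mult_mat[OF r2 hc gc] by (simp add: hh)
      finally show "h * g * rho2 a = rho2 a * (h * g)" .
    qed
    thus ?thesis unfolding end_mod_def hom_mod_def using gc hc by auto
  qed
  then obtain d where d: "h * g = d \<cdot>\<^sub>m 1\<^sub>m n2" using brick_scalar(2)[OF m2 b2] by blast
  have n1: "0 < n1" using brick_scalar(1)[OF m1 b1] .
  have cd: "c \<cdot>\<^sub>m h = d \<cdot>\<^sub>m h"
  proof -
    have "h * (g * h) = (h * g) * h" using assoc_mult_mat[OF hc gc hc] by simp
    thus ?thesis using c d hc by (simp add: mult_smult_distrib[OF hc one_carrier_mat] mult_smult_assoc_mat[OF one_carrier_mat hc])
  qed
  show ?thesis
  proof (cases "h = 0\<^sub>m n2 n1")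
    case True
    then show ?thesis using gc by simp
  next
    case False
    then obtain i j where ij: "i < n2" "j < n1" "h $$ (i,j) \<noteq> 0"
      using hc by (metis carrier_matD(1) carrier_matD(2) eq_matI index_zero_mat(1) index_zero_mat(2) index_zero_mat(3))
    have "c * h $$ (i,j) = d * h $$ (i,j)"
      using arg_cong[OF cd, of "\<lambda>M. M $$ (i,j)"] ij hc by auto
    hence cd': "c = d" using ij by simp
    show ?thesis
    proof (cases "c = 0")
      case True
      then show ?thesis using c d cd' by simp
    next
      case False
      let ?g = "inverse c \<cdot>\<^sub>m g"
      have "?g \<in> hom_mod n2 rho2 n1 rho1"
        unfolding hom_mod_def using gc r1 r2
        by (auto simp: mult_smult_assoc_mat[of _ n1 n2 _ n2] mult_smult_distrib[of _ n1 n1 _ n2] gh)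
      moreover have "h * ?g = 1\<^sub>m n2" using d cd' False hc gc
        by (simp add: mult_smult_distrib[OF hc gc])
      moreover have "?g * h = 1\<^sub>m n1" using c False hc gc
        by (simp add: mult_smult_assoc_mat[OF gc hc])
      ultimately have "iso_mod n1 rho1 n2 rho2" unfolding iso_mod_def using h by blast
      thus ?thesis using ni by simp
    qed
  qed
qed

lemma fb_mult_dsum:
  fixes A :: "'k::field mat"
  assumes c: "A \<in> carrier_mat n1 n1" "B \<in> carrier_mat n1 n2" "C \<in> carrier_mat n2 n1" "D \<in> carrier_mat n2 n2"
    and r: "R1 \<in> carrier_mat n1 n1" "R2 \<in> carrier_mat n2 n2"
  shows "four_block_mat A B C D * four_block_mat R1 (0\<^sub>m n1 n2) (0\<^sub>m n2 n1) R2 =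
           four_block_mat (A * R1) (B * R2) (C * R1) (D * R2)"
    "four_block_mat R1 (0\<^sub>m n1 n2) (0\<^sub>m n2 n1) R2 * four_block_mat A B C D =
           four_block_mat (R1 * A) (R1 * B) (R2 * C) (R2 * D)"
proof -
  show "four_block_mat A B C D * four_block_mat R1 (0\<^sub>m n1 n2) (0\<^sub>m n2 n1) R2 =
           four_block_mat (A * R1) (B * R2) (C * R1) (D * R2)"
    by (subst mult_four_block_mat[OF c r(1) zero_carrier_mat zero_carrier_mat r(2)], insert c r, auto)
  show "four_block_mat R1 (0\<^sub>m n1 n2) (0\<^sub>m n2 n1) R2 * four_block_mat A B C D =
           four_block_mat (R1 * A) (R1 * B) (R2 * C) (R2 * D)"
    by (subst mult_four_block_mat[OF r(1) zero_carrier_mat zero_carrier_mat r(2) c], insert c r, auto)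
qed

lemma fb_in_E:
  fixes rho1 rho2 :: "'a::ring_1 \<Rightarrow> 'k::field mat"
  assumes m1: "is_module scale n1 rho1" and m2: "is_module scale n2 rho2"
    and c: "A \<in> carrier_mat n1 n1" "B \<in> carrier_mat n1 n2" "C \<in> carrier_mat n2 n1" "D \<in> carrier_mat n2 n2"
  shows "four_block_mat A B C D \<in> end_mod (n1 + n2) (dsum_rep n1 rho1 n2 rho2) \<longleftrightarrow>
     A \<in> end_mod n1 rho1 \<and> B \<in> hom_mod n2 rho2 n1 rho1 \<and> C \<in> hom_mod n1 rho1 n2 rho2 \<and> D \<in> end_mod n2 rho2"
proof -
  have r1: "\<And>a. rho1 a \<in> carrier_mat n1 n1" using m1 unfolding is_module_def by auto
  have r2: "\<And>a. rho2 a \<in> carrier_mat n2 n2" using m2 unfolding is_module_def by auto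
  have "(\<forall>a. four_block_mat A B C D * dsum_rep n1 rho1 n2 rho2 a = dsum_rep n1 rho1 n2 rho2 a * four_block_mat A B C D)
     \<longleftrightarrow> (\<forall>a. A * rho1 a = rho1 a * A \<and> B * rho2 a = rho1 a * B \<and> C * rho1 a = rho2 a * C \<and> D * rho2 a = rho2 a * D)"
  proof -
    have "\<And>a. four_block_mat A B C D * dsum_rep n1 rho1 n2 rho2 a = dsum_rep n1 rho1 n2 rho2 a * four_block_mat A B C D
       \<longleftrightarrow> A * rho1 a = rho1 a * A \<and> B * rho2 a = rho1 a * B \<and> C * rho1 a = rho2 a * C \<and> D * rho2 a = rho2 a * D"
    proof -
      fix a
      show "?thesis a"
        unfolding dsum_rep_def fb_mult_dsum[OF c r1 r2]
      proof
        assume "four_block_mat (A * rho1 a) (B * rho2 a) (C * rho1 a) (D * rho2 a) =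
                four_block_mat (rho1 a * A) (rho1 a * B) (rho2 a * C) (rho2 a * D)"
        from fb_inj[OF _ _ _ _ _ _ _ _ this] show "A * rho1 a = rho1 a * A \<and> B * rho2 a = rho1 a * B \<and> C * rho1 a = rho2 a * C \<and> D * rho2 a = rho2 a * D"
          using c r1[of a] r2[of a] by (meson mult_carrier_mat)
      qed simp
    qed
    thus ?thesis by blast
  qed
  moreover have "four_block_mat A B C D \<in> carrier_mat (n1 + n2) (n1 + n2)" using c by auto
  ultimately show ?thesis unfolding end_mod_def hom_mod_def using c by auto
qed

lemma scalar_end:
  assumes m: "is_module scale n rho"
  shows "(c::'k::field) \<cdot>\<^sub>m 1\<^sub>m n \<in> end_mod n rho"
proof -
  have rc: "\<And>a. rho a \<in> carrier_mat n n" using m unfolding is_module_def by auto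
  show ?thesis
    unfolding end_mod_def hom_mod_def using rc
    by (auto simp: mult_smult_assoc_mat[of _ n n _ n] mult_smult_distrib[of _ n n _ n] left_mult_one_mat[OF rc] right_mult_one_mat[OF rc])
qed

definition gen :: "nat \<Rightarrow> nat \<Rightarrow> 'k::field \<Rightarrow> 'k mat \<Rightarrow> 'k mat \<Rightarrow> 'k \<Rightarrow> 'k mat" where
  "gen n1 n2 \<alpha> B C \<beta> = four_block_mat (\<alpha> \<cdot>\<^sub>m 1\<^sub>m n1) B C (\<beta> \<cdot>\<^sub>m 1\<^sub>m n2)"

lemma E_char:
  fixes rho1 rho2 :: "'a::ring_1 \<Rightarrow> 'k::field mat"
  assumes m1: "is_module scale n1 rho1" and m2: "is_module scale n2 rho2"
    and b1: "brick n1 rho1" and b2: "brick n2 rho2"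
  shows "x \<in> end_mod (n1 + n2) (dsum_rep n1 rho1 n2 rho2) \<longleftrightarrow>
    (\<exists>\<alpha> \<beta> B C. B \<in> hom_mod n2 rho2 n1 rho1 \<and> C \<in> hom_mod n1 rho1 n2 rho2 \<and> x = gen n1 n2 \<alpha> B C \<beta>)"
proof
  assume x: "x \<in> end_mod (n1 + n2) (dsum_rep n1 rho1 n2 rho2)"
  hence xc: "x \<in> carrier_mat (n1 + n2) (n1 + n2)" unfolding end_mod_def hom_mod_def by auto
  obtain A B C D where sb: "split_block x n1 n1 = (A, B, C, D)" by (cases "split_block x n1 n1") auto
  note s = split_block[OF sb, of n2 n2]
  have c: "A \<in> carrier_mat n1 n1" "B \<in> carrier_mat n1 n2" "C \<in> carrier_mat n2 n1" "D \<in> carrier_mat n2 n2"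
    and xe: "x = four_block_mat A B C D" using s xc by auto
  have "A \<in> end_mod n1 rho1 \<and> B \<in> hom_mod n2 rho2 n1 rho1 \<and> C \<in> hom_mod n1 rho1 n2 rho2 \<and> D \<in> end_mod n2 rho2"
    using fb_in_E[OF m1 m2 c] x xe by simp
  moreover then obtain \<alpha> \<beta> where "A = \<alpha> \<cdot>\<^sub>m 1\<^sub>m n1" "D = \<beta> \<cdot>\<^sub>m 1\<^sub>m n2"
    using brick_scalar(2)[OF m1 b1] brick_scalar(2)[OF m2 b2] by metis
  ultimately show "\<exists>\<alpha> \<beta> B C. B \<in> hom_mod n2 rho2 n1 rho1 \<and> C \<in> hom_mod n1 rho1 n2 rho2 \<and> x = gen n1 n2 \<alpha> B C \<beta>"
    unfolding gen_def using xe by blast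
next
  assume "\<exists>\<alpha> \<beta> B C. B \<in> hom_mod n2 rho2 n1 rho1 \<and> C \<in> hom_mod n1 rho1 n2 rho2 \<and> x = gen n1 n2 \<alpha> B C \<beta>"
  then obtain \<alpha> \<beta> B C where h: "B \<in> hom_mod n2 rho2 n1 rho1" "C \<in> hom_mod n1 rho1 n2 rho2" "x = gen n1 n2 \<alpha> B C \<beta>" by blast
  have c: "B \<in> carrier_mat n1 n2" "C \<in> carrier_mat n2 n1" using h unfolding hom_mod_def by auto
  show "x \<in> end_mod (n1 + n2) (dsum_rep n1 rho1 n2 rho2)"
    unfolding h(3) gen_def
    using fb_in_E[OF m1 m2 smult_carrier_mat[OF one_carrier_mat] c smult_carrier_mat[OF one_carrier_mat]]
      scalar_end[OF m1] scalar_end[OF m2] h by blast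
qed

lemma smult_one_left: "A \<in> carrier_mat n m \<Longrightarrow> ((a::'k::field) \<cdot>\<^sub>m 1\<^sub>m n) * A = a \<cdot>\<^sub>m A"
  by (simp add: mult_smult_assoc_mat[OF one_carrier_mat])

lemma smult_one_right: "A \<in> carrier_mat n m \<Longrightarrow> A * ((a::'k::field) \<cdot>\<^sub>m 1\<^sub>m m) = a \<cdot>\<^sub>m A"
  by (simp add: mult_smult_distrib[OF _ one_carrier_mat])

lemma gen_carrier: "B \<in> carrier_mat n1 n2 \<Longrightarrow> C \<in> carrier_mat n2 n1 \<Longrightarrow> gen n1 n2 a B C b \<in> carrier_mat (n1+n2) (n1+n2)"
  unfolding gen_def by auto

lemma gen_mult:
  fixes B :: "'k::field mat"
  assumes c: "B \<in> carrier_mat n1 n2" "C \<in> carrier_mat n2 n1" "B' \<in> carrier_mat n1 n2" "C' \<in> carrier_mat n2 n1"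
  shows "gen n1 n2 a B C b * gen n1 n2 a' B' C' b' =
    four_block_mat ((a * a') \<cdot>\<^sub>m 1\<^sub>m n1 + B * C') (a \<cdot>\<^sub>m B' + b' \<cdot>\<^sub>m B) (a' \<cdot>\<^sub>m C + b \<cdot>\<^sub>m C') (C * B' + (b * b') \<cdot>\<^sub>m 1\<^sub>m n2)"
  unfolding gen_def
  apply (subst mult_four_block_mat[OF smult_carrier_mat[OF one_carrier_mat] c(1,2) smult_carrier_mat[OF one_carrier_mat]
     smult_carrier_mat[OF one_carrier_mat] c(3,4) smult_carrier_mat[OF one_carrier_mat]])
  using c by (simp add: smult_one_left smult_one_right smult_one_left[OF smult_carrier_mat[OF one_carrier_mat]])

lemma sym_kill:
  fixes E :: "'k::field mat set"
  assumes s: "symmetric_alg E" and Ec: "E \<subseteq> carrier_mat n n" and one: "1\<^sub>m n \<in> E" and zero: "0\<^sub>m n n \<in> E"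
    and N: "N \<in> E" and e: "e \<in> E" and eN: "e * N = N" and Ne: "N * e = 0\<^sub>m n n"
    and Ny: "\<forall>y\<in>E. \<exists>c. N * y = c \<cdot>\<^sub>m N"
  shows "N = 0\<^sub>m n n"
proof -
  obtain \<Phi> where bij: "bij_betw \<Phi> E (kdual E)"
    and bim: "\<forall>a\<in>E. \<forall>x\<in>E. \<forall>b\<in>E. \<Phi> (a * x * b) = (\<lambda>y. if y \<in> E then \<Phi> x (b * y * a) else 0)"
    using s unfolding symmetric_alg_def by blast
  define u where "u = \<Phi> (1\<^sub>m n)"
  have uk: "u \<in> kdual E" using bij one unfolding u_def bij_betw_def by auto
  have usm: "\<And>c x. x \<in> E \<Longrightarrow> u (c \<cdot>\<^sub>m x) = c * u x" using uk unfolding kdual_def by auto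
  have Phi1: "\<And>x. x \<in> E \<Longrightarrow> \<Phi> x = (\<lambda>y. if y \<in> E then u (x * y) else 0)"
  proof -
    fix x assume x: "x \<in> E"
    have xc: "x \<in> carrier_mat n n" using x Ec by auto
    have "\<Phi> (1\<^sub>m n * 1\<^sub>m n * x) = (\<lambda>y. if y \<in> E then u (x * y * 1\<^sub>m n) else 0)"
      using bim one x unfolding u_def by blast
    moreover have "\<And>y. y \<in> E \<Longrightarrow> x * y * 1\<^sub>m n = x * y" using xc Ec by auto
    ultimately show "?thesis x" using xc by (auto intro!: ext)
  qed
  have Phi2: "\<And>x y. x \<in> E \<Longrightarrow> y \<in> E \<Longrightarrow> \<Phi> x y = u (y * x)"
  proof -
    fix x y assume x: "x \<in> E" and y: "y \<in> E"
    have xc: "x \<in> carrier_mat n n" using x Ec by auto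
    have yc: "y \<in> carrier_mat n n" using y Ec by auto
    have "\<Phi> (x * 1\<^sub>m n * 1\<^sub>m n) = (\<lambda>y. if y \<in> E then u (1\<^sub>m n * y * x) else 0)"
      using bim one x unfolding u_def by blast
    thus "\<Phi> x y = u (y * x)" using xc yc y by simp
  qed
  have comm: "\<And>x y. x \<in> E \<Longrightarrow> y \<in> E \<Longrightarrow> u (x * y) = u (y * x)"
    using Phi1 Phi2 by metis
  have u0: "u (0\<^sub>m n n) = 0"
  proof -
    have "u (0 \<cdot>\<^sub>m 1\<^sub>m n) = 0 * u (1\<^sub>m n)" by (rule usm[OF one])
    moreover have "(0::'k) \<cdot>\<^sub>m 1\<^sub>m n = 0\<^sub>m n n" by simp
    ultimately show ?thesis by simp
  qed
  have uN: "u N = 0" using comm[OF e N] eN Ne u0 by simp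
  have "\<Phi> N = \<Phi> (0\<^sub>m n n)"
  proof -
    have "\<And>y. y \<in> E \<Longrightarrow> u (N * y) = u (0\<^sub>m n n * y)"
    proof -
      fix y assume y: "y \<in> E"
      obtain c where "N * y = c \<cdot>\<^sub>m N" using Ny y by blast
      hence "u (N * y) = 0" using usm[OF N] uN by simp
      moreover have "0\<^sub>m n n * y = 0\<^sub>m n n" using y Ec by auto
      ultimately show "u (N * y) = u (0\<^sub>m n n * y)" using u0 by simp
    qed
    thus ?thesis using Phi1[OF N] Phi1[OF zero] by auto
  qed
  thus ?thesis using bij N zero unfolding bij_betw_def inj_on_def by blast
qed

lemma zero_hom:
  assumes "is_module scale n rho" "is_module scale m sigma"
  shows "0\<^sub>m m n \<in> hom_mod n rho m (sigma :: 'a::ring_1 \<Rightarrow> 'k::field mat)"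
proof -
  have "\<And>a. rho a \<in> carrier_mat n n" "\<And>a. sigma a \<in> carrier_mat m m" using assms unfolding is_module_def by auto
  hence "\<And>a. 0\<^sub>m m n * rho a = sigma a * 0\<^sub>m m n" by (metis left_mult_zero_mat right_mult_zero_mat)
  thus ?thesis unfolding hom_mod_def by auto
qed

lemma fwd:
  fixes rho1 rho2 :: "'a::ring_1 \<Rightarrow> 'k::field mat"
  assumes m1: "is_module scale n1 rho1" and m2: "is_module scale n2 rho2"
    and b1: "brick n1 rho1" and b2: "brick n2 rho2"
    and ni: "\<not> iso_mod n1 rho1 n2 rho2"
    and s: "symmetric_alg (end_mod (n1 + n2) (dsum_rep n1 rho1 n2 rho2))"
  shows "hom_mod n1 rho1 n2 rho2 = {0\<^sub>m n2 n1} \<and> hom_mod n2 rho2 n1 rho1 = {0\<^sub>m n1 n2}"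
proof -
  let ?E = "end_mod (n1 + n2) (dsum_rep n1 rho1 n2 rho2)"
  note Ech = E_char[OF m1 m2 b1 b2]
  have Ec: "?E \<subseteq> carrier_mat (n1+n2) (n1+n2)" unfolding end_mod_def hom_mod_def by auto
  have z12: "0\<^sub>m n2 n1 \<in> hom_mod n1 rho1 n2 rho2" by (rule zero_hom[OF m1 m2])
  have z21: "0\<^sub>m n1 n2 \<in> hom_mod n2 rho2 n1 rho1" by (rule zero_hom[OF m2 m1])
  have "gen n1 n2 1 (0\<^sub>m n1 n2) (0\<^sub>m n2 n1) 1 \<in> ?E" using Ech z12 z21 by blast
  hence one: "1\<^sub>m (n1+n2) \<in> ?E" by (simp add: gen_def)
  have "gen n1 n2 0 (0\<^sub>m n1 n2) (0\<^sub>m n2 n1) 0 \<in> ?E" using Ech z12 z21 by blast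
  hence zero: "0\<^sub>m (n1+n2) (n1+n2) \<in> ?E" by (simp add: gen_def)
  have A: "g = 0\<^sub>m n1 n2" if g: "g \<in> hom_mod n2 rho2 n1 rho1" for g
  proof -
    have gc: "g \<in> carrier_mat n1 n2" using g unfolding hom_mod_def by auto
    let ?N = "gen n1 n2 0 g (0\<^sub>m n2 n1) 0" and ?e = "gen n1 n2 1 (0\<^sub>m n1 n2) (0\<^sub>m n2 n1) 0"
    have N: "?N \<in> ?E" using Ech g z12 by blast
    have e: "?e \<in> ?E" using Ech z21 z12 by blast
    have eN: "?e * ?N = ?N" using gc by (simp add: gen_mult[OF zero_carrier_mat zero_carrier_mat gc zero_carrier_mat]; simp add: gen_def)
    have Ne: "?N * ?e = 0\<^sub>m (n1+n2) (n1+n2)" using gc by (simp add: gen_mult[OF gc zero_carrier_mat zero_carrier_mat zero_carrier_mat]; simp add: gen_def)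
    have Ny: "\<forall>y\<in>?E. \<exists>c. ?N * y = c \<cdot>\<^sub>m ?N"
    proof
      fix y assume "y \<in> ?E"
      then obtain \<alpha> \<beta> B C where h: "B \<in> hom_mod n2 rho2 n1 rho1" "C \<in> hom_mod n1 rho1 n2 rho2" "y = gen n1 n2 \<alpha> B C \<beta>"
        using Ech by blast
      have c: "B \<in> carrier_mat n1 n2" "C \<in> carrier_mat n2 n1" using h unfolding hom_mod_def by auto
      have gC: "g * C = 0\<^sub>m n1 n1" using comp_zero[OF m1 m2 b1 b2 ni g h(2)] by simp
      have "?N * y = \<beta> \<cdot>\<^sub>m ?N" unfolding h(3) using gc c gC
        by (simp add: gen_mult[OF gc zero_carrier_mat c]; simp add: gen_def smult_four_block_mat[OF zero_carrier_mat gc zero_carrier_mat zero_carrier_mat])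
      thus "\<exists>c. ?N * y = c \<cdot>\<^sub>m ?N" by blast
    qed
    have "?N = 0\<^sub>m (n1+n2) (n1+n2)" by (rule sym_kill[OF s Ec one zero N e eN Ne Ny])
    hence "four_block_mat (0\<^sub>m n1 n1) g (0\<^sub>m n2 n1) (0\<^sub>m n2 n2) = four_block_mat (0\<^sub>m n1 n1) (0\<^sub>m n1 n2) (0\<^sub>m n2 n1) (0\<^sub>m n2 n2)"
      by (simp add: gen_def)
    from fb_inj[OF zero_carrier_mat gc zero_carrier_mat zero_carrier_mat zero_carrier_mat zero_carrier_mat zero_carrier_mat zero_carrier_mat this] show ?thesis by auto
  qed
  have B: "h = 0\<^sub>m n2 n1" if h: "h \<in> hom_mod n1 rho1 n2 rho2" for h
  proof -
    have hc: "h \<in> carrier_mat n2 n1" using h unfolding hom_mod_def by auto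
    let ?N = "gen n1 n2 0 (0\<^sub>m n1 n2) h 0" and ?e = "gen n1 n2 0 (0\<^sub>m n1 n2) (0\<^sub>m n2 n1) 1"
    have N: "?N \<in> ?E" using Ech h z21 by blast
    have e: "?e \<in> ?E" using Ech z21 z12 by blast
    have eN: "?e * ?N = ?N" using hc by (simp add: gen_mult[OF zero_carrier_mat zero_carrier_mat zero_carrier_mat hc]; simp add: gen_def)
    have Ne: "?N * ?e = 0\<^sub>m (n1+n2) (n1+n2)" using hc by (simp add: gen_mult[OF zero_carrier_mat hc zero_carrier_mat zero_carrier_mat]; simp add: gen_def)
    have Ny: "\<forall>y\<in>?E. \<exists>c. ?N * y = c \<cdot>\<^sub>m ?N"
    proof
      fix y assume "y \<in> ?E"
      then obtain \<alpha> \<beta> B C where hh: "B \<in> hom_mod n2 rho2 n1 rho1" "C \<in> hom_mod n1 rho1 n2 rho2" "y = gen n1 n2 \<alpha> B C \<beta>"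
        using Ech by blast
      have c: "B \<in> carrier_mat n1 n2" "C \<in> carrier_mat n2 n1" using hh unfolding hom_mod_def by auto
      have hB: "h * B = 0\<^sub>m n2 n2" using comp_zero[OF m1 m2 b1 b2 ni hh(1) h] by simp
      have "?N * y = \<alpha> \<cdot>\<^sub>m ?N" unfolding hh(3) using hc c hB
        by (simp add: gen_mult[OF zero_carrier_mat hc c]; simp add: gen_def smult_four_block_mat[OF zero_carrier_mat zero_carrier_mat hc zero_carrier_mat])
      thus "\<exists>c. ?N * y = c \<cdot>\<^sub>m ?N" by blast
    qed
    have "?N = 0\<^sub>m (n1+n2) (n1+n2)" by (rule sym_kill[OF s Ec one zero N e eN Ne Ny])
    hence "four_block_mat (0\<^sub>m n1 n1) (0\<^sub>m n1 n2) h (0\<^sub>m n2 n2) = four_block_mat (0\<^sub>m n1 n1) (0\<^sub>m n1 n2) (0\<^sub>m n2 n1) (0\<^sub>m n2 n2)"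
      by (simp add: gen_def)
    from fb_inj[OF zero_carrier_mat zero_carrier_mat hc zero_carrier_mat zero_carrier_mat zero_carrier_mat zero_carrier_mat zero_carrier_mat this] show ?thesis by auto
  qed
  show ?thesis using A B z12 z21 by blast
qed

definition blk :: "nat \<Rightarrow> nat \<Rightarrow> 'k::field \<Rightarrow> 'k \<Rightarrow> 'k mat" where
  "blk n1 n2 a b = gen n1 n2 a (0\<^sub>m n1 n2) (0\<^sub>m n2 n1) b"

lemma blk_mult: "blk n1 n2 a b * blk n1 n2 c d = blk n1 n2 (a * c) (b * d)"
  unfolding blk_def
  by (simp add: gen_mult[OF zero_carrier_mat zero_carrier_mat zero_carrier_mat zero_carrier_mat]; simp add: gen_def)

lemma blk_add: "blk n1 n2 a b + blk n1 n2 c d = blk n1 n2 (a + c) (b + d)"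
  unfolding blk_def gen_def
  by (subst add_four_block_mat[OF smult_carrier_mat[OF one_carrier_mat] zero_carrier_mat zero_carrier_mat smult_carrier_mat[OF one_carrier_mat]
     smult_carrier_mat[OF one_carrier_mat] zero_carrier_mat zero_carrier_mat smult_carrier_mat[OF one_carrier_mat]],
     auto simp: add_smult_distrib_right_mat[OF one_carrier_mat])

lemma blk_smult: "c \<cdot>\<^sub>m blk n1 n2 a b = blk n1 n2 (c * a) (c * b)"
  unfolding blk_def gen_def
  by (subst smult_four_block_mat[OF smult_carrier_mat[OF one_carrier_mat] zero_carrier_mat zero_carrier_mat smult_carrier_mat[OF one_carrier_mat]], auto)

lemma blk_carrier: "blk n1 n2 a b \<in> carrier_mat (n1+n2) (n1+n2)"
  unfolding blk_def by (rule gen_carrier, auto)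

lemma blk_ix: "0 < n1 \<Longrightarrow> 0 < n2 \<Longrightarrow> blk n1 n2 a b $$ (0,0) = a \<and> blk n1 n2 a b $$ (n1,n1) = b"
  unfolding blk_def gen_def by simp

lemma bwd:
  fixes rho1 rho2 :: "'a::ring_1 \<Rightarrow> 'k::field mat"
  assumes m1: "is_module scale n1 rho1" and m2: "is_module scale n2 rho2"
    and b1: "brick n1 rho1" and b2: "brick n2 rho2"
    and h12: "hom_mod n1 rho1 n2 rho2 = {0\<^sub>m n2 n1}" and h21: "hom_mod n2 rho2 n1 rho1 = {0\<^sub>m n1 n2}"
  shows "symmetric_alg (end_mod (n1 + n2) (dsum_rep n1 rho1 n2 rho2))"
proof -
  define E where "E = end_mod (n1 + n2) (dsum_rep n1 rho1 n2 rho2)"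
  have p1: "0 < n1" by (rule brick_scalar(1)[OF m1 b1])
  have p2: "0 < n2" by (rule brick_scalar(1)[OF m2 b2])
  have Eb: "\<And>x. x \<in> E \<longleftrightarrow> (\<exists>a b. x = blk n1 n2 a b)"
    unfolding E_def E_char[OF m1 m2 b1 b2] h12 h21 blk_def by blast
  have blkE: "\<And>a b. blk n1 n2 a b \<in> E" using Eb by blast
  define \<psi> where "\<psi> = (\<lambda>z::'k mat. z $$ (0,0) + z $$ (n1,n1))"
  have psi: "\<And>a b. \<psi> (blk n1 n2 a b) = a + b" unfolding \<psi>_def by (simp add: blk_ix[OF p1 p2])
  define \<Phi> where "\<Phi> = (\<lambda>x y. if y \<in> E then \<psi> (x * y) else 0)"
  have Pb: "\<And>a b c d. \<Phi> (blk n1 n2 a b) (blk n1 n2 c d) = a * c + b * d"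
    unfolding \<Phi>_def using blkE by (simp add: blk_mult psi)
  have Pout: "\<And>x y. y \<notin> E \<Longrightarrow> \<Phi> x y = 0" unfolding \<Phi>_def by simp
  have inj: "inj_on \<Phi> E"
  proof (rule inj_onI)
    fix x y assume "x \<in> E" "y \<in> E" and e: "\<Phi> x = \<Phi> y"
    then obtain a b c d where xy: "x = blk n1 n2 a b" "y = blk n1 n2 c d" using Eb by blast
    have "a = c" using fun_cong[OF e, of "blk n1 n2 1 0"] unfolding xy Pb by simp
    moreover have "b = d" using fun_cong[OF e, of "blk n1 n2 0 1"] unfolding xy Pb by simp
    ultimately show "x = y" using xy by simp
  qed
  have into: "\<Phi> x \<in> kdual E" if x: "x \<in> E" for x
  proof -
    obtain a b where xb: "x = blk n1 n2 a b" using x Eb by blast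
    show ?thesis unfolding kdual_def
    proof (intro CollectI conjI allI ballI impI)
      fix y z assume "y \<in> E" "z \<in> E"
      then obtain c d c' d' where "y = blk n1 n2 c d" "z = blk n1 n2 c' d'" using Eb by blast
      thus "\<Phi> x (y + z) = \<Phi> x y + \<Phi> x z" unfolding xb by (simp add: blk_add Pb algebra_simps)
    next
      fix k y assume "y \<in> E"
      then obtain c d where "y = blk n1 n2 c d" using Eb by blast
      thus "\<Phi> x (k \<cdot>\<^sub>m y) = k * \<Phi> x y" unfolding xb by (simp add: blk_smult Pb algebra_simps)
    next
      fix y assume "y \<notin> E" thus "\<Phi> x y = 0" by (rule Pout)
    qed
  qed
  have onto: "f \<in> \<Phi> ` E" if f: "f \<in> kdual E" for f
  proof -
    have fa: "\<And>y z. y \<in> E \<Longrightarrow> z \<in> E \<Longrightarrow> f (y + z) = f y + f z"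
      and fs: "\<And>k y. y \<in> E \<Longrightarrow> f (k \<cdot>\<^sub>m y) = k * f y"
      and fo: "\<And>y. y \<notin> E \<Longrightarrow> f y = 0" using f unfolding kdual_def by auto
    let ?x = "blk n1 n2 (f (blk n1 n2 1 0)) (f (blk n1 n2 0 1))"
    have "\<Phi> ?x = f"
    proof
      fix y show "\<Phi> ?x y = f y"
      proof (cases "y \<in> E")
        case True
        then obtain c d where y: "y = blk n1 n2 c d" using Eb by blast
        have "y = blk n1 n2 c 0 + blk n1 n2 0 d" unfolding y by (simp add: blk_add)
        hence "f y = f (blk n1 n2 c 0) + f (blk n1 n2 0 d)" using fa[OF blkE blkE] by simp
        moreover have "f (blk n1 n2 c 0) = c * f (blk n1 n2 1 0)"
          using fs[OF blkE, of c 1 0] by (simp add: blk_smult)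
        moreover have "f (blk n1 n2 0 d) = d * f (blk n1 n2 0 1)"
          using fs[OF blkE, of d 0 1] by (simp add: blk_smult)
        ultimately have "f y = c * f (blk n1 n2 1 0) + d * f (blk n1 n2 0 1)" by simp
        thus ?thesis unfolding y Pb by (simp add: mult.commute)
      next
        case False thus ?thesis using Pout fo by simp
      qed
    qed
    thus ?thesis using blkE by (metis image_eqI)
  qed
  have bij: "bij_betw \<Phi> E (kdual E)"
    unfolding bij_betw_def using inj into onto by blast
  have add: "\<forall>x\<in>E. \<forall>y\<in>E. \<Phi> (x + y) = (\<lambda>z. \<Phi> x z + \<Phi> y z)"
  proof (intro ballI ext)
    fix x y z assume "x \<in> E" "y \<in> E"
    then obtain a b c d where xy: "x = blk n1 n2 a b" "y = blk n1 n2 c d" using Eb by blast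
    show "\<Phi> (x + y) z = \<Phi> x z + \<Phi> y z"
    proof (cases "z \<in> E")
      case True
      then obtain e f where "z = blk n1 n2 e f" using Eb by blast
      thus ?thesis unfolding xy by (simp add: blk_add Pb algebra_simps)
    qed (simp add: Pout)
  qed
  have sm: "\<forall>c. \<forall>x\<in>E. \<Phi> (c \<cdot>\<^sub>m x) = (\<lambda>z. c * \<Phi> x z)"
  proof (intro allI ballI ext)
    fix k x z assume "x \<in> E"
    then obtain a b where xy: "x = blk n1 n2 a b" using Eb by blast
    show "\<Phi> (k \<cdot>\<^sub>m x) z = k * \<Phi> x z"
    proof (cases "z \<in> E")
      case True
      then obtain e f where "z = blk n1 n2 e f" using Eb by blast
      thus ?thesis unfolding xy by (simp add: blk_smult Pb algebra_simps)
    qed (simp add: Pout)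
  qed
  have bim: "\<forall>a\<in>E. \<forall>x\<in>E. \<forall>b\<in>E. \<Phi> (a * x * b) = (\<lambda>y. if y \<in> E then \<Phi> x (b * y * a) else 0)"
  proof (intro ballI ext)
    fix a x b y assume "a \<in> E" "x \<in> E" "b \<in> E"
    then obtain a1 a2 x1 x2 b1 b2 where v: "a = blk n1 n2 a1 a2" "x = blk n1 n2 x1 x2" "b = blk n1 n2 b1 b2"
      using Eb by metis
    show "\<Phi> (a * x * b) y = (if y \<in> E then \<Phi> x (b * y * a) else 0)"
    proof (cases "y \<in> E")
      case True
      then obtain e f where "y = blk n1 n2 e f" using Eb by blast
      thus ?thesis unfolding v by (simp add: blk_mult Pb blkE algebra_simps)
    qed (simp add: Pout)
  qed
  show ?thesis unfolding symmetric_alg_def E_def[symmetric] using bij add sm bim by blast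
qed

theorem corollary5p5:
  fixes scale :: "'k::field \<Rightarrow> 'a::ring_1 \<Rightarrow> 'a"
    and rho1 rho2 :: "'a \<Rightarrow> 'k mat" and n1 n2 :: nat
  assumes "alg_closed TYPE('k)"
    and "fd_algebra scale"
    and "is_module scale n1 rho1" and "is_module scale n2 rho2"
    and "brick n1 rho1" and "brick n2 rho2"
    and "\<not> iso_mod n1 rho1 n2 rho2"
  shows "symmetric_alg (end_mod (n1 + n2) (dsum_rep n1 rho1 n2 rho2)) \<longleftrightarrow>
           (hom_mod n1 rho1 n2 rho2 = {0\<^sub>m n2 n1} \<and> hom_mod n2 rho2 n1 rho1 = {0\<^sub>m n1 n2})"
  using fwd[OF assms(3-7)] bwd[OF assms(3-6)] by blast

end
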